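(* Let $(X_i,W_i,Y_i)$, $i=1,\dots,n$, be independently distributed observations from a regression discontinuity design with cutoff $c$, as described in the context. Assume: (A1) $\mu_0(x)$ and $\mu_1(x)$ are continuous at every $x$; (A2) $p(x)$ is continuous at every $x\neq c$; at the cutoff the right and left limits of $p$ exist and are finite, and $\lim_{x\to c^+}p(x)=p(c)\neq\lim_{x\to c^-}p(x)$; (A3) the function $C(x)=\mathbb{E}[(\epsilon_i(1)-\epsilon_i(0))\epsilon_i\mid X_i=x]$ is continuous at every $x\neq c$; at the cutoff its right and left limits exist and are finite, and $\lim_{x\to c^+}C(x)=C(c)$. Then there exist a constant $\beta$ and a continuous function $f$ such that $$Y_i=\tau_c\,p(X_i)+\beta\,\mathbf{1}(X_i\ge c)+f(X_i)+\varepsilon_i,$$ where $\varepsilon_i$ is uncorrelated with $X_i$, has expectation $0$ and variance $\sigma_i^2$. In particular, in the sharp RDD (where $W_i=\mathbf{1}(X_i\ge c)$) this representation holds with $p(X_i)=\mathbf{1}(X_i\ge c)$ and $\beta=0$.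
   Context: Each unit $i$ has potential outcomes $(Y_i(0),Y_i(1))$, a received treatment $W_i\in\{0,1\}$, observed outcome $Y_i=Y_i(W_i)$, and a real-valued running variable $X_i$; $c$ is a fixed cutoff. Define $\mu_1(x)=\mathbb{E}[Y_i(1)\mid X_i=x]$, $\mu_0(x)=\mathbb{E}[Y_i(0)\mid X_i=x]$, $p(x)=\mathbb{E}[W_i\mid X_i=x]=\mathbb{P}(W_i=1\mid X_i=x)$ (the propensity score), and deviations $\epsilon_i(0)=Y_i(0)-\mu_0(X_i)$, $\epsilon_i(1)=Y_i(1)-\mu_1(X_i)$, $\epsilon_i=W_i-p(X_i)$. The average treatment effect at the cutoff is $\tau_c=\mu_1(c)-\mu_0(c)$. $X_i$ is not assumed independent of $(\epsilon_i(0),\epsilon_i(1),\epsilon_i)$. The design is called sharp if $W_i=\mathbf{1}(X_i\ge c)$ and fuzzy otherwise. *)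

theory Defs
  imports "HOL-Probability.Probability"
begin

text \<open>m is (a version of) the regression function x \<mapsto> E[Z | X = x]:
  m is Borel, m(X) is integrable, and for every Borel set A,
  E[Z 1(X \<in> A)] = E[m(X) 1(X \<in> A)]  (Kolmogorov's defining property).\<close>
definition cond_mean_fun :: "'a measure \<Rightarrow> ('a \<Rightarrow> real) \<Rightarrow> ('a \<Rightarrow> real) \<Rightarrow> (real \<Rightarrow> real) \<Rightarrow> bool" where
  "cond_mean_fun M X Z m \<longleftrightarrow>
     m \<in> borel_measurable borel \<and> integrable M (\<lambda>\<omega>. m (X \<omega>)) \<and>
     (\<forall>A\<in>sets borel. (\<integral>\<omega>. indicator A (X \<omega>) * Z \<omega> \<partial>M) = (\<integral>\<omega>. indicator A (X \<omega>) * m (X \<omega>) \<partial>M))"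

definition rdd_repr :: "'a measure \<Rightarrow> (nat \<Rightarrow> 'a \<Rightarrow> real) \<Rightarrow> (nat \<Rightarrow> 'a \<Rightarrow> real) \<Rightarrow> nat \<Rightarrow> real
     \<Rightarrow> real \<Rightarrow> (real \<Rightarrow> real) \<Rightarrow> real \<Rightarrow> (real \<Rightarrow> real) \<Rightarrow> bool" where
  "rdd_repr M X Y n c tau q beta f \<longleftrightarrow>
     continuous_on UNIV f \<and>
     (\<forall>i<n. let e = (\<lambda>\<omega>. Y i \<omega> - (tau * q (X i \<omega>) + beta * (if X i \<omega> \<ge> c then 1 else 0) + f (X i \<omega>)))
       in integrable M e \<and> integrable M (\<lambda>\<omega>. (e \<omega>)\<^sup>2) \<and>
          (\<integral>\<omega>. e \<omega> \<partial>M) = 0 \<and>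
          integrable M (\<lambda>\<omega>. e \<omega> * X i \<omega>) \<and>
          (\<integral>\<omega>. (e \<omega> - (\<integral>\<omega>'. e \<omega>' \<partial>M)) * (X i \<omega> - (\<integral>\<omega>'. X i \<omega>' \<partial>M)) \<partial>M) = 0)"

end

theory Submission imports Defs begin

lemma L2_mult:
  fixes f g :: "'a \<Rightarrow> real"
  assumes [measurable]: "f \<in> borel_measurable M" "g \<in> borel_measurable M"
    and "integrable M (\<lambda>x. (f x)\<^sup>2)" "integrable M (\<lambda>x. (g x)\<^sup>2)"
  shows "integrable M (\<lambda>x. f x * g x)"
proof (rule Bochner_Integration.integrable_bound[of _ "\<lambda>x. (f x)\<^sup>2 + (g x)\<^sup>2"])
  show "integrable M (\<lambda>x. (f x)\<^sup>2 + (g x)\<^sup>2)" using assms by auto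
  show "(\<lambda>x. f x * g x) \<in> borel_measurable M" by measurable
  have "\<And>a b::real. \<bar>a * b\<bar> \<le> a\<^sup>2 + b\<^sup>2"
  proof -
    fix a b :: real
    have "0 \<le> (\<bar>a\<bar> - \<bar>b\<bar>)\<^sup>2" by simp
    then have "2 * (\<bar>a\<bar> * \<bar>b\<bar>) \<le> a\<^sup>2 + b\<^sup>2" by (simp add: power2_diff)
    moreover have "0 \<le> \<bar>a\<bar> * \<bar>b\<bar>" by simp
    ultimately show "\<bar>a * b\<bar> \<le> a\<^sup>2 + b\<^sup>2" unfolding abs_mult by linarith
  qed
  then show "AE x in M. norm (f x * g x) \<le> norm ((f x)\<^sup>2 + (g x)\<^sup>2)" by auto
qed

lemma L2_add:
  fixes f g :: "'a \<Rightarrow> real"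
  assumes [measurable]: "f \<in> borel_measurable M" "g \<in> borel_measurable M"
    and "integrable M (\<lambda>x. (f x)\<^sup>2)" "integrable M (\<lambda>x. (g x)\<^sup>2)"
  shows "integrable M (\<lambda>x. (f x + g x)\<^sup>2)"
proof -
  have "integrable M (\<lambda>x. (f x)\<^sup>2 + 2 * (f x * g x) + (g x)\<^sup>2)"
    using assms L2_mult[OF assms] by auto
  moreover have "(\<lambda>x. (f x + g x)\<^sup>2) = (\<lambda>x. (f x)\<^sup>2 + 2 * (f x * g x) + (g x)\<^sup>2)"
    by (rule ext) (simp add: power2_eq_square algebra_simps)
  ultimately show ?thesis by simp
qed

lemma L2_diff:
  fixes f g :: "'a \<Rightarrow> real"
  assumes [measurable]: "f \<in> borel_measurable M" "g \<in> borel_measurable M"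
    and "integrable M (\<lambda>x. (f x)\<^sup>2)" "integrable M (\<lambda>x. (g x)\<^sup>2)"
  shows "integrable M (\<lambda>x. (f x - g x)\<^sup>2)"
proof -
  have "integrable M (\<lambda>x. (f x)\<^sup>2 - 2 * (f x * g x) + (g x)\<^sup>2)"
    using assms L2_mult[OF assms] by auto
  moreover have "(\<lambda>x. (f x - g x)\<^sup>2) = (\<lambda>x. (f x)\<^sup>2 - 2 * (f x * g x) + (g x)\<^sup>2)"
    by (rule ext) (simp add: power2_eq_square algebra_simps)
  ultimately show ?thesis by simp
qed

lemma L2_int:
  fixes f :: "'a \<Rightarrow> real"
  assumes "prob_space M" "f \<in> borel_measurable M" "integrable M (\<lambda>x. (f x)\<^sup>2)"
  shows "integrable M f"
  using finite_measure.square_integrable_imp_integrable[of M f] assms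
  by (simp add: prob_space_def)

lemma subalg_X:
  assumes "prob_space M" "X \<in> borel_measurable M"
  shows "finite_measure_subalgebra M (vimage_algebra (space M) X borel)"
proof -
  have "subalgebra M (vimage_algebra (space M) X borel)"
    unfolding subalgebra_def using sets_image_in_sets[of M "space M" X borel] assms by auto
  then show ?thesis using assms
    by (simp add: finite_measure_subalgebra_def finite_measure_subalgebra_axioms_def prob_space_def)
qed

lemma X_F: "X \<in> measurable (vimage_algebra (space M) X borel) (borel :: real measure)"
  by (rule measurable_vimage_algebra1) auto

lemma comp_F:
  assumes "h \<in> borel_measurable (borel :: real measure)"
  shows "(\<lambda>w. h (X w)) \<in> borel_measurable (vimage_algebra (space M) X borel)"
  using measurable_compose[OF X_F[of X M] assms] by (simp add: comp_def)

lemma cond_mean_ce: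
  fixes X Z :: "'a \<Rightarrow> real"
  assumes P: "prob_space M" and [measurable]: "X \<in> borel_measurable M" "Z \<in> borel_measurable M"
    and iZ: "integrable M Z" and cm: "cond_mean_fun M X Z m"
  shows "AE w in M. real_cond_exp M (vimage_algebra (space M) X borel) Z w = m (X w)"
proof -
  let ?F = "vimage_algebra (space M) X borel"
  interpret finite_measure_subalgebra M ?F using subalg_X[OF P assms(2)] by simp
  have mb: "m \<in> borel_measurable borel" and im: "integrable M (\<lambda>w. m (X w))"
    and eq: "\<And>A. A \<in> sets borel \<Longrightarrow> (\<integral>w. indicator A (X w) * Z w \<partial>M) = (\<integral>w. indicator A (X w) * m (X w) \<partial>M)"
    using cm unfolding cond_mean_fun_def by auto
  show ?thesis
  proof (rule real_cond_exp_charact)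
    fix A assume "A \<in> sets ?F"
    then obtain B where B: "B \<in> sets borel" "A = X -` B \<inter> space M"
      using sets_vimage_algebra2[of X "space M" borel] by auto
    have i1: "(\<integral>w\<in>A. Z w \<partial>M) = (\<integral>w. indicator B (X w) * Z w \<partial>M)"
      unfolding set_lebesgue_integral_def
      by (rule Bochner_Integration.integral_cong) (auto simp: B indicator_def)
    have i2: "(\<integral>w\<in>A. m (X w) \<partial>M) = (\<integral>w. indicator B (X w) * m (X w) \<partial>M)"
      unfolding set_lebesgue_integral_def
      by (rule Bochner_Integration.integral_cong) (auto simp: B indicator_def)
    show "(\<integral>w\<in>A. Z w \<partial>M) = (\<integral>w\<in>A. m (X w) \<partial>M)" using i1 i2 eq[OF B(1)] by simp
  next
    show "integrable M Z" by fact
    show "integrable M (\<lambda>w. m (X w))" by fact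
    show "(\<lambda>w. m (X w)) \<in> borel_measurable ?F" by (rule comp_F[OF mb])
  qed
qed

lemma L2_ce:
  fixes X Z :: "'a \<Rightarrow> real"
  assumes P: "prob_space M" and [measurable]: "X \<in> borel_measurable M" "Z \<in> borel_measurable M"
    and "integrable M (\<lambda>w. (Z w)\<^sup>2)"
  shows "integrable M (\<lambda>w. (real_cond_exp M (vimage_algebra (space M) X borel) Z w)\<^sup>2)"
proof -
  let ?F = "vimage_algebra (space M) X borel"
  interpret finite_measure_subalgebra M ?F using subalg_X[OF P assms(2)] by simp
  have iZ: "integrable M Z" using L2_int[OF P assms(3,4)] .
  have cv: "convex_on UNIV (\<lambda>x::real. x\<^sup>2)" using convex_power2 by simp
  show ?thesis
    by (rule integrable_convex_cond_exp[where I=UNIV and q="\<lambda>x. x\<^sup>2" and a=0 and b=0,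
        OF iZ _ _ assms(4) cv]) auto
qed

lemma L2_cm:
  fixes X Z :: "'a \<Rightarrow> real"
  assumes P: "prob_space M" and [measurable]: "X \<in> borel_measurable M" "Z \<in> borel_measurable M"
    and "integrable M (\<lambda>w. (Z w)\<^sup>2)" and cm: "cond_mean_fun M X Z m"
  shows "integrable M (\<lambda>w. (m (X w))\<^sup>2)"
proof -
  have mb[measurable]: "m \<in> borel_measurable borel" using cm unfolding cond_mean_fun_def by auto
  have "AE w in M. (real_cond_exp M (vimage_algebra (space M) X borel) Z w)\<^sup>2 = (m (X w))\<^sup>2"
    using cond_mean_ce[OF P assms(2,3) L2_int[OF P assms(3,4)] cm] by auto
  then show ?thesis using L2_ce[OF P assms(2-4)]
    by (subst integrable_cong_AE[symmetric]) auto
qed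


lemma resid:
  fixes X Y :: "'a \<Rightarrow> real" and g :: "real \<Rightarrow> real"
  assumes P: "prob_space M" and [measurable]: "X \<in> borel_measurable M" "Y \<in> borel_measurable M"
    "g \<in> borel_measurable borel"
    and LX: "integrable M (\<lambda>w. (X w)\<^sup>2)" and LY: "integrable M (\<lambda>w. (Y w)\<^sup>2)"
    and ce: "AE w in M. real_cond_exp M (vimage_algebra (space M) X borel) Y w = g (X w)"
  shows "integrable M (\<lambda>w. Y w - g (X w))" "integrable M (\<lambda>w. (Y w - g (X w))\<^sup>2)"
    "(\<integral>w. Y w - g (X w) \<partial>M) = 0" "integrable M (\<lambda>w. (Y w - g (X w)) * X w)"
    "(\<integral>w. (Y w - g (X w)) * X w \<partial>M) = 0"
proof -
  let ?F = "vimage_algebra (space M) X borel"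
  interpret finite_measure_subalgebra M ?F using subalg_X[OF P assms(2)] by simp
  let ?c = "real_cond_exp M ?F Y"
  have ae2: "AE w in M. (?c w)\<^sup>2 = (g (X w))\<^sup>2" using ce by auto
  have gL2: "integrable M (\<lambda>w. (g (X w))\<^sup>2)"
    using L2_ce[OF P assms(2,3) LY] ae2 by (subst integrable_cong_AE[symmetric]) auto
  have iY: "integrable M Y" using L2_int[OF P assms(3) LY] .
  have igX: "integrable M (\<lambda>w. g (X w))" using L2_int[OF P _ gL2] by simp
  have iX: "integrable M X" using L2_int[OF P assms(2) LX] .
  show "integrable M (\<lambda>w. Y w - g (X w))" using iY igX by auto
  show "integrable M (\<lambda>w. (Y w - g (X w))\<^sup>2)" using L2_diff[OF _ _ LY gL2] by simp
  have "(\<integral>w. g (X w) \<partial>M) = (\<integral>w. ?c w \<partial>M)"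
    by (rule integral_cong_AE) (use ce in auto)
  also have "\<dots> = (\<integral>w. Y w \<partial>M)" using real_cond_exp_int(2)[OF iY] .
  finally have e1: "(\<integral>w. g (X w) \<partial>M) = (\<integral>w. Y w \<partial>M)" .
  show "(\<integral>w. Y w - g (X w) \<partial>M) = 0" using iY igX e1 by simp
  have iXY: "integrable M (\<lambda>w. X w * Y w)" using L2_mult[OF _ _ LX LY] by simp
  have iXg: "integrable M (\<lambda>w. X w * g (X w))" using L2_mult[OF _ _ LX gL2] by simp
  have "(\<integral>w. X w * g (X w) \<partial>M) = (\<integral>w. X w * ?c w \<partial>M)"
    by (rule integral_cong_AE) (use ce in auto)
  also have "\<dots> = (\<integral>w. X w * Y w \<partial>M)"
    by (rule real_cond_exp_intg(2)[OF iXY X_F]) simp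
  finally have e2: "(\<integral>w. X w * g (X w) \<partial>M) = (\<integral>w. X w * Y w \<partial>M)" .
  have eq: "(\<lambda>w. (Y w - g (X w)) * X w) = (\<lambda>w. X w * Y w - X w * g (X w))"
    by (rule ext) (simp add: algebra_simps)
  show "integrable M (\<lambda>w. (Y w - g (X w)) * X w)" unfolding eq using iXY iXg by auto
  show "(\<integral>w. (Y w - g (X w)) * X w \<partial>M) = 0" unfolding eq using iXY iXg e2 by simp
qed


lemma general_ce:
  fixes X W Y0 Y1 Y :: "'a \<Rightarrow> real" and mu0 mu1 p C :: "real \<Rightarrow> real"
  assumes P: "prob_space M" and mX[measurable]: "X \<in> borel_measurable M"
    and [measurable]: "W \<in> borel_measurable M" "Y0 \<in> borel_measurable M" "Y1 \<in> borel_measurable M"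
    and binW: "\<And>w. w \<in> space M \<Longrightarrow> W w = 0 \<or> W w = 1"
    and obsY: "\<And>w. w \<in> space M \<Longrightarrow> Y w = (if W w = 1 then Y1 w else Y0 w)"
    and L0: "integrable M (\<lambda>w. (Y0 w)\<^sup>2)" and L1: "integrable M (\<lambda>w. (Y1 w)\<^sup>2)"
    and c0: "cond_mean_fun M X Y0 mu0" and c1: "cond_mean_fun M X Y1 mu1"
    and cp: "cond_mean_fun M X W p"
    and cC: "cond_mean_fun M X
                  (\<lambda>w. ((Y1 w - mu1 (X w)) - (Y0 w - mu0 (X w))) * (W w - p (X w))) C"
  shows "Y \<in> borel_measurable M" "integrable M (\<lambda>w. (Y w)\<^sup>2)"
    "AE w in M. real_cond_exp M (vimage_algebra (space M) X borel) Y w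
        = mu0 (X w) + p (X w) * (mu1 (X w) - mu0 (X w)) + C (X w)"
proof -
  let ?F = "vimage_algebra (space M) X borel"
  interpret finite_measure_subalgebra M ?F using subalg_X[OF P mX] by simp
  interpret PS: prob_space M by (rule P)
  have [measurable]: "mu0 \<in> borel_measurable borel" "mu1 \<in> borel_measurable borel"
    "p \<in> borel_measurable borel" "C \<in> borel_measurable borel"
    using c0 c1 cp cC unfolding cond_mean_fun_def by auto
  define e0 where "e0 = (\<lambda>w. Y0 w - mu0 (X w))"
  define e1 where "e1 = (\<lambda>w. Y1 w - mu1 (X w))"
  define D where "D = (\<lambda>w. mu1 (X w) - mu0 (X w))"
  define A1 where "A1 = (\<lambda>w. D w * W w)"
  define A2 where "A2 = (\<lambda>w. p (X w) * (e1 w - e0 w))"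
  define G where "G = (\<lambda>w. (e1 w - e0 w) * (W w - p (X w)))"
  have me0[measurable]: "e0 \<in> borel_measurable M" unfolding e0_def by measurable
  have me1[measurable]: "e1 \<in> borel_measurable M" unfolding e1_def by measurable
  have mD[measurable]: "D \<in> borel_measurable M" unfolding D_def by measurable
  have mA1[measurable]: "A1 \<in> borel_measurable M" unfolding A1_def by measurable
  have mA2[measurable]: "A2 \<in> borel_measurable M" unfolding A2_def by measurable
  have mG[measurable]: "G \<in> borel_measurable M" unfolding G_def by measurable
  have cG: "cond_mean_fun M X G C" using cC unfolding G_def e0_def e1_def .
  have decomp: "\<And>w. w \<in> space M \<Longrightarrow> Y w = Y0 w + A1 w + A2 w + G w"
  proof -
    fix w assume w: "w \<in> space M"
    show "Y w = Y0 w + A1 w + A2 w + G w"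
      using binW[OF w] obsY[OF w]
      by (auto simp: A1_def A2_def G_def D_def e0_def e1_def algebra_simps)
  qed
  have mY[measurable]: "Y \<in> borel_measurable M"
  proof -
    have "(\<lambda>w. Y0 w + A1 w + A2 w + G w) \<in> borel_measurable M" by measurable
    then show ?thesis using decomp measurable_cong[of M Y "\<lambda>w. Y0 w + A1 w + A2 w + G w"] by simp
  qed
  show "Y \<in> borel_measurable M" by (rule mY)
  have LW: "integrable M (\<lambda>w. (W w)\<^sup>2)"
  proof (rule integrable_const_bound[where B=1])
    have "\<And>w. w \<in> space M \<Longrightarrow> norm ((W w)\<^sup>2) \<le> (1::real)"
      using binW by fastforce
    then show "AE w in M. norm ((W w)\<^sup>2) \<le> (1::real)" by (rule AE_I2)
  qed simp
  have LmuX0: "integrable M (\<lambda>w. (mu0 (X w))\<^sup>2)" by (rule L2_cm[OF P mX _ L0 c0]) simp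
  have LmuX1: "integrable M (\<lambda>w. (mu1 (X w))\<^sup>2)" by (rule L2_cm[OF P mX _ L1 c1]) simp
  have LpX: "integrable M (\<lambda>w. (p (X w))\<^sup>2)" by (rule L2_cm[OF P mX _ LW cp]) simp
  have Le0: "integrable M (\<lambda>w. (e0 w)\<^sup>2)" unfolding e0_def by (rule L2_diff[OF _ _ L0 LmuX0]) simp_all
  have Le1: "integrable M (\<lambda>w. (e1 w)\<^sup>2)" unfolding e1_def by (rule L2_diff[OF _ _ L1 LmuX1]) simp_all
  have LD: "integrable M (\<lambda>w. (D w)\<^sup>2)" unfolding D_def by (rule L2_diff[OF _ _ LmuX1 LmuX0]) simp_all
  have Le10: "integrable M (\<lambda>w. (e1 w - e0 w)\<^sup>2)" by (rule L2_diff[OF _ _ Le1 Le0]) simp_all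
  have LWp: "integrable M (\<lambda>w. (W w - p (X w))\<^sup>2)" by (rule L2_diff[OF _ _ LW LpX]) simp_all
  have iY0: "integrable M Y0" using L2_int[OF P _ L0] by simp
  have iY1: "integrable M Y1" using L2_int[OF P _ L1] by simp
  have iW: "integrable M W" using L2_int[OF P _ LW] by simp
  have imu0: "integrable M (\<lambda>w. mu0 (X w))" using L2_int[OF P _ LmuX0] by simp
  have imu1: "integrable M (\<lambda>w. mu1 (X w))" using L2_int[OF P _ LmuX1] by simp
  have ie0: "integrable M e0" using L2_int[OF P _ Le0] by simp
  have ie1: "integrable M e1" using L2_int[OF P _ Le1] by simp
  have iA1: "integrable M A1" unfolding A1_def by (rule L2_mult[OF _ _ LD LW]) simp_all
  have iA2: "integrable M A2" unfolding A2_def by (rule L2_mult[OF _ _ LpX Le10]) simp_all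
  have iG: "integrable M G" unfolding G_def by (rule L2_mult[OF _ _ Le10 LWp]) simp_all
  have L2Y: "integrable M (\<lambda>w. (Y w)\<^sup>2)"
  proof (rule Bochner_Integration.integrable_bound[of _ "\<lambda>w. (Y0 w)\<^sup>2 + (Y1 w)\<^sup>2"])
    show "integrable M (\<lambda>w. (Y0 w)\<^sup>2 + (Y1 w)\<^sup>2)" using L0 L1 by auto
    show "(\<lambda>w. (Y w)\<^sup>2) \<in> borel_measurable M" by measurable
    show "AE w in M. norm ((Y w)\<^sup>2) \<le> norm ((Y0 w)\<^sup>2 + (Y1 w)\<^sup>2)"
      by (rule AE_I2) (simp add: obsY)
  qed
  show "integrable M (\<lambda>w. (Y w)\<^sup>2)" by (rule L2Y)
  let ?c = "real_cond_exp M ?F"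
  have s1: "AE w in M. ?c Y w = ?c (\<lambda>w. Y0 w + A1 w + A2 w + G w) w"
    by (rule real_cond_exp_cong) (auto intro!: AE_I2 simp: decomp)
  have s2: "AE w in M. ?c (\<lambda>w. Y0 w + A1 w + A2 w + G w) w = ?c (\<lambda>w. Y0 w + A1 w + A2 w) w + ?c G w"
    by (rule real_cond_exp_add[of "\<lambda>w. Y0 w + A1 w + A2 w" G]) (use iY0 iA1 iA2 iG in auto)
  have s3: "AE w in M. ?c (\<lambda>w. Y0 w + A1 w + A2 w) w = ?c (\<lambda>w. Y0 w + A1 w) w + ?c A2 w"
    by (rule real_cond_exp_add[of "\<lambda>w. Y0 w + A1 w" A2]) (use iY0 iA1 iA2 in auto)
  have s4: "AE w in M. ?c (\<lambda>w. Y0 w + A1 w) w = ?c Y0 w + ?c A1 w"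
    by (rule real_cond_exp_add[of Y0 A1]) (use iY0 iA1 in auto)
  have s5: "AE w in M. ?c Y0 w = mu0 (X w)" by (rule cond_mean_ce[OF P mX _ iY0 c0]) simp
  have s6: "AE w in M. ?c Y1 w = mu1 (X w)" by (rule cond_mean_ce[OF P mX _ iY1 c1]) simp
  have s7: "AE w in M. ?c W w = p (X w)" by (rule cond_mean_ce[OF P mX _ iW cp]) simp
  have s8: "AE w in M. ?c G w = C (X w)" by (rule cond_mean_ce[OF P mX _ iG cG]) simp
  have s9: "AE w in M. ?c A1 w = D w * ?c W w"
    unfolding A1_def
    by (rule real_cond_exp_mult) (use iA1 in \<open>auto simp: A1_def D_def intro!: comp_F\<close>)
  have s10: "AE w in M. ?c A2 w = p (X w) * ?c (\<lambda>w. e1 w - e0 w) w"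
    unfolding A2_def
    by (rule real_cond_exp_mult) (use iA2 in \<open>auto simp: A2_def intro!: comp_F\<close>)
  have s11: "AE w in M. ?c (\<lambda>w. e1 w - e0 w) w = ?c e1 w - ?c e0 w"
    by (rule real_cond_exp_diff) (use ie1 ie0 in auto)
  have s12: "AE w in M. ?c e1 w = ?c Y1 w - ?c (\<lambda>w. mu1 (X w)) w"
    unfolding e1_def by (rule real_cond_exp_diff) (use iY1 imu1 in auto)
  have s13: "AE w in M. ?c e0 w = ?c Y0 w - ?c (\<lambda>w. mu0 (X w)) w"
    unfolding e0_def by (rule real_cond_exp_diff) (use iY0 imu0 in auto)
  have s14: "AE w in M. ?c (\<lambda>w. mu1 (X w)) w = mu1 (X w)"
    by (rule real_cond_exp_F_meas) (use imu1 in \<open>auto intro!: comp_F\<close>)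
  have s15: "AE w in M. ?c (\<lambda>w. mu0 (X w)) w = mu0 (X w)"
    by (rule real_cond_exp_F_meas) (use imu0 in \<open>auto intro!: comp_F\<close>)
  show "AE w in M. ?c Y w = mu0 (X w) + p (X w) * (mu1 (X w) - mu0 (X w)) + C (X w)"
    using s1 s2 s3 s4 s5 s6 s7 s8 s9 s10 s11 s12 s13 s14 s15
    by eventually_elim (simp add: D_def algebra_simps)
qed


lemma sharp_ce:
  fixes X W Y0 Y1 Y :: "'a \<Rightarrow> real" and mu0 mu1 :: "real \<Rightarrow> real" and c :: real
  assumes P: "prob_space M" and mX[measurable]: "X \<in> borel_measurable M"
    and [measurable]: "Y0 \<in> borel_measurable M" "Y1 \<in> borel_measurable M"
    and sharp: "\<And>w. w \<in> space M \<Longrightarrow> W w = (if X w \<ge> c then 1 else 0)"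
    and obsY: "\<And>w. w \<in> space M \<Longrightarrow> Y w = (if W w = 1 then Y1 w else Y0 w)"
    and L0: "integrable M (\<lambda>w. (Y0 w)\<^sup>2)" and L1: "integrable M (\<lambda>w. (Y1 w)\<^sup>2)"
    and c0: "cond_mean_fun M X Y0 mu0" and c1: "cond_mean_fun M X Y1 mu1"
  shows "AE w in M. real_cond_exp M (vimage_algebra (space M) X borel) Y w
        = mu0 (X w) + (if X w \<ge> c then 1 else 0) * (mu1 (X w) - mu0 (X w))"
proof -
  let ?F = "vimage_algebra (space M) X borel"
  interpret finite_measure_subalgebra M ?F using subalg_X[OF P mX] by simp
  interpret PS: prob_space M by (rule P)
  define I where "I = (\<lambda>w. if X w \<ge> c then 1 else (0::real))"
  have mI[measurable]: "I \<in> borel_measurable M" unfolding I_def by measurable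
  have IF: "I \<in> borel_measurable ?F"
    unfolding I_def by (rule comp_F[where h="\<lambda>x. if x \<ge> c then 1 else 0", simplified]) measurable
  define A where "A = (\<lambda>w. I w * (Y1 w - Y0 w))"
  have [measurable]: "A \<in> borel_measurable M" unfolding A_def by measurable
  have decomp: "\<And>w. w \<in> space M \<Longrightarrow> Y w = Y0 w + A w"
    using sharp obsY by (auto simp: A_def I_def)
  have LI: "integrable M (\<lambda>w. (I w)\<^sup>2)"
    by (rule integrable_const_bound[where B=1]) (auto simp: I_def)
  have L10: "integrable M (\<lambda>w. (Y1 w - Y0 w)\<^sup>2)" by (rule L2_diff[OF _ _ L1 L0]) simp_all
  have iA: "integrable M A" unfolding A_def by (rule L2_mult[OF _ _ LI L10]) simp_all
  have iY0: "integrable M Y0" using L2_int[OF P _ L0] by simp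
  have iY1: "integrable M Y1" using L2_int[OF P _ L1] by simp
  have mY: "Y \<in> borel_measurable M"
    using decomp measurable_cong[of M Y "\<lambda>w. Y0 w + A w"] by simp
  let ?c = "real_cond_exp M ?F"
  have s1: "AE w in M. ?c Y w = ?c (\<lambda>w. Y0 w + A w) w"
    by (rule real_cond_exp_cong) (auto intro!: AE_I2 simp: decomp mY)
  have s2: "AE w in M. ?c (\<lambda>w. Y0 w + A w) w = ?c Y0 w + ?c A w"
    by (rule real_cond_exp_add) (use iY0 iA in auto)
  have s3: "AE w in M. ?c A w = I w * ?c (\<lambda>w. Y1 w - Y0 w) w"
    unfolding A_def by (rule real_cond_exp_mult) (use iA IF in \<open>auto simp: A_def\<close>)
  have s4: "AE w in M. ?c (\<lambda>w. Y1 w - Y0 w) w = ?c Y1 w - ?c Y0 w"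
    by (rule real_cond_exp_diff) (use iY1 iY0 in auto)
  have s5: "AE w in M. ?c Y0 w = mu0 (X w)" by (rule cond_mean_ce[OF P mX _ iY0 c0]) simp
  have s6: "AE w in M. ?c Y1 w = mu1 (X w)" by (rule cond_mean_ce[OF P mX _ iY1 c1]) simp
  show ?thesis using s1 s2 s3 s4 s5 s6
    by eventually_elim (simp add: I_def)
qed


lemma cont_f:
  fixes mu0 mu1 p C :: "real \<Rightarrow> real" and c pl Cl :: real
  assumes A1: "\<And>x. isCont mu0 x" "\<And>x. isCont mu1 x"
    and A2: "\<And>x. x \<noteq> c \<Longrightarrow> isCont p x" "(p \<longlongrightarrow> pl) (at_left c)" "(p \<longlongrightarrow> p c) (at_right c)"
    and A3: "\<And>x. x \<noteq> c \<Longrightarrow> isCont C x" "(C \<longlongrightarrow> Cl) (at_left c)" "(C \<longlongrightarrow> C c) (at_right c)"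
  shows "continuous_on UNIV (\<lambda>x. mu0 x + p x * (mu1 x - mu0 x) + C x - (mu1 c - mu0 c) * p x
            - (C c - Cl) * (if x \<ge> c then 1 else 0))"
    (is "continuous_on UNIV ?f")
proof -
  let ?t = "mu1 c - mu0 c"
  have "isCont ?f x" for x
  proof (cases "x < c")
    case True
    have ev: "eventually (\<lambda>y. y \<in> {..<c}) (nhds x)"
      by (rule eventually_nhds_in_open) (use True in auto)
    have E: "eventually (\<lambda>y. ?f y = mu0 y + p y * (mu1 y - mu0 y) + C y - ?t * p y) (nhds x)"
      using ev by eventually_elim auto
    have "isCont (\<lambda>y. mu0 y + p y * (mu1 y - mu0 y) + C y - ?t * p y) x"
      using A1 A2(1)[of x] A3(1)[of x] True by (intro continuous_intros) auto
    then show ?thesis by (subst isCont_cong[OF E])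
  next
    case F: False
    show ?thesis
    proof (cases "x > c")
      case True
      have ev: "eventually (\<lambda>y. y \<in> {c<..}) (nhds x)"
        by (rule eventually_nhds_in_open) (use True in auto)
      have E: "eventually (\<lambda>y. ?f y = mu0 y + p y * (mu1 y - mu0 y) + C y - ?t * p y - (C c - Cl)) (nhds x)"
        using ev by eventually_elim auto
      have "isCont (\<lambda>y. mu0 y + p y * (mu1 y - mu0 y) + C y - ?t * p y - (C c - Cl)) x"
        using A1 A2(1)[of x] A3(1)[of x] True by (intro continuous_intros) auto
      then show ?thesis by (subst isCont_cong[OF E])
    next
      case False
      with F have xc: "x = c" by auto
      have m0: "(mu0 \<longlongrightarrow> mu0 c) (at c)" "(mu1 \<longlongrightarrow> mu1 c) (at c)"
        using A1 isCont_def by blast+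
      have m0l: "(mu0 \<longlongrightarrow> mu0 c) (at_left c)" "(mu1 \<longlongrightarrow> mu1 c) (at_left c)"
        "(mu0 \<longlongrightarrow> mu0 c) (at_right c)" "(mu1 \<longlongrightarrow> mu1 c) (at_right c)"
        using m0 filterlim_at_split by blast+
      have lt0: "eventually (\<lambda>y. y \<in> {c - 1<..<c}) (at_left c)"
        by (rule eventually_at_left_real) simp
      have lt: "eventually (\<lambda>y. y < c) (at_left c)"
        using lt0 by eventually_elim auto
      have L: "(?f \<longlongrightarrow> ?f c) (at_left c)"
      proof -
        have ev: "eventually (\<lambda>y. ?f y = mu0 y + p y * (mu1 y - mu0 y - ?t) + C y) (at_left c)"
          using lt by eventually_elim (auto simp: algebra_simps)
        have "((\<lambda>y. mu0 y + p y * (mu1 y - mu0 y - ?t) + C y) \<longlongrightarrow> mu0 c + pl * (mu1 c - mu0 c - ?t) + Cl) (at_left c)"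
          by (intro tendsto_intros m0l A2(2) A3(2))
        then have "((\<lambda>y. mu0 y + p y * (mu1 y - mu0 y - ?t) + C y) \<longlongrightarrow> ?f c) (at_left c)"
          by simp
        then show ?thesis using tendsto_cong[OF ev] by blast
      qed
      have R: "(?f \<longlongrightarrow> ?f c) (at_right c)"
      proof -
        have ev: "eventually (\<lambda>y. ?f y = mu0 y + p y * (mu1 y - mu0 y - ?t) + C y - (C c - Cl)) (at_right c)"
          using eventually_at_right_less[of c] by eventually_elim (auto simp: algebra_simps)
        have "((\<lambda>y. mu0 y + p y * (mu1 y - mu0 y - ?t) + C y - (C c - Cl)) \<longlongrightarrow> mu0 c + p c * (mu1 c - mu0 c - ?t) + C c - (C c - Cl)) (at_right c)"
          by (intro tendsto_intros m0l A2(3) A3(3))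
        then have "((\<lambda>y. mu0 y + p y * (mu1 y - mu0 y - ?t) + C y - (C c - Cl)) \<longlongrightarrow> ?f c) (at_right c)"
          by simp
        then show ?thesis using tendsto_cong[OF ev] by blast
      qed
      show ?thesis unfolding xc isCont_def using filterlim_split_at[OF L R] .
    qed
  qed
  then show ?thesis by (simp add: continuous_on_eq_continuous_at)
qed

lemma cont_sharp:
  fixes mu0 mu1 :: "real \<Rightarrow> real" and c :: real
  assumes A1: "\<And>x. isCont mu0 x" "\<And>x. isCont mu1 x"
  shows "continuous_on UNIV (\<lambda>x. mu0 x + (if x \<ge> c then 1 else 0) * (mu1 x - mu0 x)
            - (mu1 c - mu0 c) * (if x \<ge> c then 1 else 0))"
    (is "continuous_on UNIV ?f")
proof -
  let ?t = "mu1 c - mu0 c"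
  have "isCont ?f x" for x
  proof (cases "x < c")
    case True
    have ev: "eventually (\<lambda>y. y \<in> {..<c}) (nhds x)"
      by (rule eventually_nhds_in_open) (use True in auto)
    have E: "eventually (\<lambda>y. ?f y = mu0 y) (nhds x)"
      using ev by eventually_elim auto
    show ?thesis by (subst isCont_cong[OF E]) (rule A1(1))
  next
    case F: False
    show ?thesis
    proof (cases "x > c")
      case True
      have ev: "eventually (\<lambda>y. y \<in> {c<..}) (nhds x)"
        by (rule eventually_nhds_in_open) (use True in auto)
      have E: "eventually (\<lambda>y. ?f y = mu1 y - ?t) (nhds x)"
        using ev by eventually_elim auto
      have "isCont (\<lambda>y. mu1 y - ?t) x"
        using A1 by (intro continuous_intros) auto
      then show ?thesis by (subst isCont_cong[OF E])
    next
      case False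
      with F have xc: "x = c" by auto
      have m0: "(mu0 \<longlongrightarrow> mu0 c) (at c)" "(mu1 \<longlongrightarrow> mu1 c) (at c)"
        using A1 isCont_def by blast+
      have m0l: "(mu0 \<longlongrightarrow> mu0 c) (at_left c)" "(mu1 \<longlongrightarrow> mu1 c) (at_right c)"
        using m0 filterlim_at_split by blast+
      have lt0: "eventually (\<lambda>y. y \<in> {c - 1<..<c}) (at_left c)"
        by (rule eventually_at_left_real) simp
      have lt: "eventually (\<lambda>y. y < c) (at_left c)"
        using lt0 by eventually_elim auto
      have L: "(?f \<longlongrightarrow> ?f c) (at_left c)"
      proof -
        have ev: "eventually (\<lambda>y. ?f y = mu0 y) (at_left c)"
          using lt by eventually_elim auto
        have "(mu0 \<longlongrightarrow> ?f c) (at_left c)" using m0l(1) by simp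
        then show ?thesis using tendsto_cong[OF ev] by blast
      qed
      have R: "(?f \<longlongrightarrow> ?f c) (at_right c)"
      proof -
        have ev: "eventually (\<lambda>y. ?f y = mu1 y - ?t) (at_right c)"
          using eventually_at_right_less[of c] by eventually_elim auto
        have "((\<lambda>y. mu1 y - ?t) \<longlongrightarrow> mu1 c - ?t) (at_right c)"
          by (intro tendsto_intros m0l)
        then have "((\<lambda>y. mu1 y - ?t) \<longlongrightarrow> ?f c) (at_right c)" by simp
        then show ?thesis using tendsto_cong[OF ev] by blast
      qed
      show ?thesis unfolding xc isCont_def using filterlim_split_at[OF L R] .
    qed
  qed
  then show ?thesis by (simp add: continuous_on_eq_continuous_at)
qed


lemma cov0:
  fixes e x :: "'a \<Rightarrow> real"
  assumes "integrable M e" "integrable M (\<lambda>w. e w * x w)" "(\<integral>w. e w \<partial>M) = 0"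
    "(\<integral>w. e w * x w \<partial>M) = 0"
  shows "(\<integral>\<omega>. (e \<omega> - (\<integral>\<omega>'. e \<omega>' \<partial>M)) * (x \<omega> - (\<integral>\<omega>'. x \<omega>' \<partial>M)) \<partial>M) = 0"
proof -
  let ?m = "\<integral>\<omega>'. x \<omega>' \<partial>M"
  have eq: "(\<lambda>\<omega>. (e \<omega> - (\<integral>\<omega>'. e \<omega>' \<partial>M)) * (x \<omega> - ?m)) = (\<lambda>\<omega>. e \<omega> * x \<omega> - ?m * e \<omega>)"
    using assms(3) by (simp add: algebra_simps)
  show ?thesis unfolding eq using assms by simp
qed

theorem theorem1:
  fixes M :: "'a measure" and n :: nat and c :: real
    and X W Y0 Y1 Y :: "nat \<Rightarrow> 'a \<Rightarrow> real"
    and mu0 mu1 p C :: "real \<Rightarrow> real"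
  assumes P: "prob_space M"
    and indep: "prob_space.indep_vars M (\<lambda>_. borel) (\<lambda>i \<omega>. (X i \<omega>, W i \<omega>, Y i \<omega>)) {..<n}"
    and meas: "\<And>i. i < n \<Longrightarrow> X i \<in> borel_measurable M \<and> W i \<in> borel_measurable M
                  \<and> Y0 i \<in> borel_measurable M \<and> Y1 i \<in> borel_measurable M"
    and binW: "\<And>i \<omega>. i < n \<Longrightarrow> \<omega> \<in> space M \<Longrightarrow> W i \<omega> = 0 \<or> W i \<omega> = 1"
    and obsY: "\<And>i \<omega>. i < n \<Longrightarrow> \<omega> \<in> space M \<Longrightarrow> Y i \<omega> = (if W i \<omega> = 1 then Y1 i \<omega> else Y0 i \<omega>)"
    and L2: "\<And>i. i < n \<Longrightarrow> integrable M (\<lambda>\<omega>. (X i \<omega>)\<^sup>2) \<and> integrable M (\<lambda>\<omega>. (Y0 i \<omega>)\<^sup>2)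
                  \<and> integrable M (\<lambda>\<omega>. (Y1 i \<omega>)\<^sup>2)"
    and mu0_def: "\<And>i. i < n \<Longrightarrow> cond_mean_fun M (X i) (Y0 i) mu0"
    and mu1_def: "\<And>i. i < n \<Longrightarrow> cond_mean_fun M (X i) (Y1 i) mu1"
    and p_def: "\<And>i. i < n \<Longrightarrow> cond_mean_fun M (X i) (W i) p"
    and C_def: "\<And>i. i < n \<Longrightarrow> cond_mean_fun M (X i)
                  (\<lambda>\<omega>. ((Y1 i \<omega> - mu1 (X i \<omega>)) - (Y0 i \<omega> - mu0 (X i \<omega>))) * (W i \<omega> - p (X i \<omega>))) C"
    and A1: "\<And>x. isCont mu0 x" "\<And>x. isCont mu1 x"
    and A2: "\<And>x. x \<noteq> c \<Longrightarrow> isCont p x" "\<exists>pl. (p \<longlongrightarrow> pl) (at_left c) \<and> pl \<noteq> p c"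
            "(p \<longlongrightarrow> p c) (at_right c)"
    and A3: "\<And>x. x \<noteq> c \<Longrightarrow> isCont C x" "\<exists>Cl. (C \<longlongrightarrow> Cl) (at_left c)"
            "(C \<longlongrightarrow> C c) (at_right c)"
  shows "(\<exists>beta f. rdd_repr M X Y n c (mu1 c - mu0 c) p beta f)
       \<and> ((\<forall>i<n. \<forall>\<omega>\<in>space M. W i \<omega> = (if X i \<omega> \<ge> c then 1 else 0)) \<longrightarrow>
            (\<exists>f. rdd_repr M X Y n c (mu1 c - mu0 c) (\<lambda>x. if x \<ge> c then 1 else 0) 0 f))"
proof -
  obtain Cl where Cl: "(C \<longlongrightarrow> Cl) (at_left c)" using A3(2) by blast
  obtain pl where pl: "(p \<longlongrightarrow> pl) (at_left c)" using A2(2) by blast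
  define t where "t = mu1 c - mu0 c"
  define g where "g = (\<lambda>x. mu0 x + p x * (mu1 x - mu0 x) + C x)"
  define beta where "beta = C c - Cl"
  define f where "f = (\<lambda>x. mu0 x + p x * (mu1 x - mu0 x) + C x - t * p x
            - beta * (if x \<ge> c then 1 else 0))"
  have gen: "integrable M (\<lambda>w. Y i w - g (X i w)) \<and> integrable M (\<lambda>w. (Y i w - g (X i w))\<^sup>2) \<and>
      (\<integral>w. Y i w - g (X i w) \<partial>M) = 0 \<and> integrable M (\<lambda>w. (Y i w - g (X i w)) * X i w) \<and>
      (\<integral>\<omega>. (Y i \<omega> - g (X i \<omega>)) * (X i \<omega> - (\<integral>\<omega>'. X i \<omega>' \<partial>M)) \<partial>M) = 0"
    if i: "i < n" for i
  proof -
    have m: "X i \<in> borel_measurable M" "W i \<in> borel_measurable M" "Y0 i \<in> borel_measurable M"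
      "Y1 i \<in> borel_measurable M" using meas[OF i] by auto
    have l: "integrable M (\<lambda>\<omega>. (X i \<omega>)\<^sup>2)" "integrable M (\<lambda>\<omega>. (Y0 i \<omega>)\<^sup>2)"
      "integrable M (\<lambda>\<omega>. (Y1 i \<omega>)\<^sup>2)" using L2[OF i] by auto
    note G = general_ce[OF P m binW[OF i] obsY[OF i] l(2,3) mu0_def[OF i] mu1_def[OF i] p_def[OF i] C_def[OF i]]
    have [measurable]: "mu0 \<in> borel_measurable borel" "mu1 \<in> borel_measurable borel"
      "p \<in> borel_measurable borel" "C \<in> borel_measurable borel"
      using mu0_def[OF i] mu1_def[OF i] p_def[OF i] C_def[OF i] unfolding cond_mean_fun_def by auto
    have gb: "g \<in> borel_measurable borel" unfolding g_def by measurable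
    have ce: "AE w in M. real_cond_exp M (vimage_algebra (space M) (X i) borel) (Y i) w = g (X i w)"
      using G(3) unfolding g_def .
    note R = resid[OF P m(1) G(1) gb l(1) G(2) ce]
    show ?thesis using R cov0[OF R(1) R(4) R(3) R(5)] by simp
  qed
  have ee: "\<And>x. t * p x + beta * (if c \<le> x then 1 else 0) + f x = g x"
    by (simp add: f_def g_def)
  have part1: "rdd_repr M X Y n c t p beta f"
  proof -
    have "continuous_on UNIV f" unfolding f_def t_def beta_def
      by (rule cont_f[OF A1 A2(1) pl A2(3) A3(1) Cl A3(3)])
    then show ?thesis unfolding rdd_repr_def Let_def ee using gen by simp
  qed
  have part2: "\<exists>f. rdd_repr M X Y n c t (\<lambda>x. if x \<ge> c then 1 else 0) 0 f"
    if sharp: "\<forall>i<n. \<forall>\<omega>\<in>space M. W i \<omega> = (if X i \<omega> \<ge> c then 1 else 0)"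
  proof -
    define g2 where "g2 = (\<lambda>x. mu0 x + (if x \<ge> c then 1 else 0) * (mu1 x - mu0 x))"
    define f2 where "f2 = (\<lambda>x. mu0 x + (if x \<ge> c then 1 else 0) * (mu1 x - mu0 x)
            - t * (if x \<ge> c then 1 else 0))"
    have gen2: "integrable M (\<lambda>w. Y i w - g2 (X i w)) \<and> integrable M (\<lambda>w. (Y i w - g2 (X i w))\<^sup>2) \<and>
      (\<integral>w. Y i w - g2 (X i w) \<partial>M) = 0 \<and> integrable M (\<lambda>w. (Y i w - g2 (X i w)) * X i w) \<and>
      (\<integral>\<omega>. (Y i \<omega> - g2 (X i \<omega>)) * (X i \<omega> - (\<integral>\<omega>'. X i \<omega>' \<partial>M)) \<partial>M) = 0"
      if i: "i < n" for i
    proof -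
      have m: "X i \<in> borel_measurable M" "W i \<in> borel_measurable M" "Y0 i \<in> borel_measurable M"
        "Y1 i \<in> borel_measurable M" using meas[OF i] by auto
      have l: "integrable M (\<lambda>\<omega>. (X i \<omega>)\<^sup>2)" "integrable M (\<lambda>\<omega>. (Y0 i \<omega>)\<^sup>2)"
        "integrable M (\<lambda>\<omega>. (Y1 i \<omega>)\<^sup>2)" using L2[OF i] by auto
      note G = general_ce[OF P m binW[OF i] obsY[OF i] l(2,3) mu0_def[OF i] mu1_def[OF i] p_def[OF i] C_def[OF i]]
      have [measurable]: "mu0 \<in> borel_measurable borel" "mu1 \<in> borel_measurable borel"
        using mu0_def[OF i] mu1_def[OF i] unfolding cond_mean_fun_def by auto
      have gb: "g2 \<in> borel_measurable borel" unfolding g2_def by measurable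
      have ce: "AE w in M. real_cond_exp M (vimage_algebra (space M) (X i) borel) (Y i) w = g2 (X i w)"
        using sharp_ce[OF P m(1) m(3) m(4) _ obsY[OF i] l(2,3) mu0_def[OF i] mu1_def[OF i], of c]
          sharp i unfolding g2_def by simp
      note R = resid[OF P m(1) G(1) gb l(1) G(2) ce]
      show ?thesis using R cov0[OF R(1) R(4) R(3) R(5)] by simp
    qed
    have ee2: "\<And>x. t * (if c \<le> x then 1 else 0) + 0 * (if c \<le> x then 1 else 0) + f2 x = g2 x"
      by (simp add: f2_def g2_def)
    have "continuous_on UNIV f2" unfolding f2_def t_def
      by (rule cont_sharp[OF A1])
    then have "rdd_repr M X Y n c t (\<lambda>x. if x \<ge> c then 1 else 0) 0 f2"
      unfolding rdd_repr_def Let_def ee2 using gen2 by simp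
    then show ?thesis by blast
  qed
  show ?thesis using part1 part2 unfolding t_def by blast
qed

end
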